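(* Let $G$ be a graph and $e=uv\in E(G)$. If $m\geq 2$ is an integer and $$P(G-\{e\},m)<\frac{m}{m-1}P(G,m),$$ then $P_{DP}(G,m)<P(G,m)$.
   Context: All graphs are finite and simple; $G-\{e\}$ is $G$ with edge $e$ deleted. $P(G,m)$ denotes the chromatic polynomial of $G$. A cover of a graph $G$ is a pair $\mathcal{H}=(L,H)$ where $H$ is a graph and $L:V(G)\to\mathcal{P}(V(H))$ satisfies: (1) the sets $L(u)$, $u\in V(G)$, partition $V(H)$; (2) for every $u$, $H[L(u)]$ is complete; (3) if $E_H(L(u),L(v))\neq\emptyset$ then $u=v$ or $uv\in E(G)$; (4) if $uv\in E(G)$ then $E_H(L(u),L(v))$ is a matching (possibly empty). Here $E_H(S,U)$ is the set of edges of $H$ between $S$ and $U$. The cover is $m$-fold if $|L(u)|=m$ for all $u$. An $\mathcal{H}$-coloring is an independent set of $H$ of size $|V(G)|$. $P_{DP}(G,\mathcal{H})$ is the number of $\mathcal{H}$-colorings, and $P_{DP}(G,m)$ is the minimum of $P_{DP}(G,\mathcal{H})$ over all $m$-fold covers $\mathcal{H}$ of $G$. *)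

theory Defs
  imports Complex_Main "HOL-Library.FuncSet"
begin

definition graph :: "'a set \<Rightarrow> 'a set set \<Rightarrow> bool" where
  "graph V E \<longleftrightarrow> finite V \<and> (\<forall>e\<in>E. \<exists>x y. e = {x, y} \<and> x \<noteq> y \<and> x \<in> V \<and> y \<in> V)"

definition chrom :: "'a set \<Rightarrow> 'a set set \<Rightarrow> nat \<Rightarrow> nat" where
  "chrom V E m = card {f \<in> V \<rightarrow>\<^sub>E {..<m}. \<forall>x y. {x, y} \<in> E \<longrightarrow> f x \<noteq> f y}"

definition is_cover :: "'a set \<Rightarrow> 'a set set \<Rightarrow> ('a \<Rightarrow> 'b set) \<Rightarrow> 'b set \<Rightarrow> 'b set set \<Rightarrow> bool" where
  "is_cover V E L VH EH \<longleftrightarrow>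
     graph VH EH \<and>
     (\<Union>u\<in>V. L u) = VH \<and>
     (\<forall>u\<in>V. \<forall>v\<in>V. u \<noteq> v \<longrightarrow> L u \<inter> L v = {}) \<and>
     (\<forall>u\<in>V. \<forall>x\<in>L u. \<forall>y\<in>L u. x \<noteq> y \<longrightarrow> {x, y} \<in> EH) \<and>
     (\<forall>u\<in>V. \<forall>v\<in>V. (\<exists>x\<in>L u. \<exists>y\<in>L v. {x, y} \<in> EH) \<longrightarrow> u = v \<or> {u, v} \<in> E) \<and>
     (\<forall>u v. {u, v} \<in> E \<longrightarrow>
        (\<forall>x\<in>L u. \<forall>y\<in>L v. \<forall>y'\<in>L v. {x, y} \<in> EH \<and> {x, y'} \<in> EH \<longrightarrow> y = y') \<and>
        (\<forall>y\<in>L v. \<forall>x\<in>L u. \<forall>x'\<in>L u. {x, y} \<in> EH \<and> {x', y} \<in> EH \<longrightarrow> x = x'))"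

definition is_mfold_cover :: "'a set \<Rightarrow> 'a set set \<Rightarrow> nat \<Rightarrow> ('a \<Rightarrow> 'b set) \<Rightarrow> 'b set \<Rightarrow> 'b set set \<Rightarrow> bool" where
  "is_mfold_cover V E m L VH EH \<longleftrightarrow> is_cover V E L VH EH \<and> (\<forall>u\<in>V. card (L u) = m)"

text \<open>Number of H-colourings: independent sets of H of size |V(G)|.\<close>
definition dp_count :: "'a set \<Rightarrow> 'b set \<Rightarrow> 'b set set \<Rightarrow> nat" where
  "dp_count V VH EH = card {I. I \<subseteq> VH \<and> (\<forall>x\<in>I. \<forall>y\<in>I. {x, y} \<notin> EH) \<and> card I = card V}"

text \<open>DP colour function: minimum over all m-fold covers. Every finite cover is isomorphic
  to one whose vertices lie in the type 'a \<times> nat, so we minimise over those.\<close>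
definition P_DP :: "'a set \<Rightarrow> 'a set set \<Rightarrow> nat \<Rightarrow> nat" where
  "P_DP V E m = Inf {dp_count V VH EH | L VH (EH :: ('a \<times> nat) set set). is_mfold_cover V E m L VH EH}"

end

theory Submission imports Defs begin

definition Rel :: "'a set \<Rightarrow> 'a \<Rightarrow> 'a \<Rightarrow> nat \<Rightarrow> nat \<Rightarrow> 'a set set \<Rightarrow> ('a\<times>nat) \<Rightarrow> ('a\<times>nat) \<Rightarrow> bool" where
 "Rel e u v m d E p q \<longleftrightarrow> fst p = fst q \<or> ({fst p, fst q} \<in> E - {e} \<and> snd p = snd q)
   \<or> (fst p = u \<and> fst q = v \<and> snd q = (snd p + d) mod m) \<or> (fst p = v \<and> fst q = u \<and> snd p = (snd q + d) mod m)"

definition CEH :: "'a set \<Rightarrow> 'a set set \<Rightarrow> 'a set \<Rightarrow> 'a \<Rightarrow> 'a \<Rightarrow> nat \<Rightarrow> nat \<Rightarrow> ('a\<times>nat) set set" where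
 "CEH V E e u v m d = {{p,q} | p q. p \<in> V \<times> {..<m} \<and> q \<in> V \<times> {..<m} \<and> p \<noteq> q \<and> Rel e u v m d E p q}"

lemma Rel_sym: "Rel e u v m d E p q \<longleftrightarrow> Rel e u v m d E q p"
  unfolding Rel_def by (auto simp: insert_commute)

lemma CEH_elem: "z \<in> CEH V E e u v m d \<Longrightarrow> \<exists>x y. z = {x,y} \<and> x \<in> V \<times> {..<m} \<and> y \<in> V \<times> {..<m} \<and> x \<noteq> y \<and> Rel e u v m d E x y"
  unfolding CEH_def by (elim CollectE exE) blast

lemma CEH_iff: "{x,y} \<in> CEH V E e u v m d \<longleftrightarrow> x \<in> V \<times> {..<m} \<and> y \<in> V \<times> {..<m} \<and> x \<noteq> y \<and> Rel e u v m d E x y"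
proof
  assume "{x,y} \<in> CEH V E e u v m d"
  from CEH_elem[OF this] obtain p q where h: "{x,y} = {p,q}" "p \<in> V \<times> {..<m}" "q \<in> V \<times> {..<m}" "p \<noteq> q" "Rel e u v m d E p q"
    by (elim exE conjE) (rule that, assumption+)
  have "(x = p \<and> y = q) \<or> (x = q \<and> y = p)" using h(1) by (rule doubleton_eq_iff[THEN iffD1])
  thus "x \<in> V \<times> {..<m} \<and> y \<in> V \<times> {..<m} \<and> x \<noteq> y \<and> Rel e u v m d E x y"
  proof
    assume "x = p \<and> y = q" thus ?thesis using h by simp
  next
    assume "x = q \<and> y = p" thus ?thesis using h Rel_sym[of e u v m d E p q] by auto
  qed
next
  assume "x \<in> V \<times> {..<m} \<and> y \<in> V \<times> {..<m} \<and> x \<noteq> y \<and> Rel e u v m d E x y"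
  thus "{x,y} \<in> CEH V E e u v m d" unfolding CEH_def by (intro CollectI exI[of _ x] exI[of _ y]) simp
qed

lemma shift_inj_aux: "(j + d) mod m = (j' + d) mod (m::nat) \<Longrightarrow> j' < m \<Longrightarrow> j \<le> j' \<Longrightarrow> j = j'"
proof -
  assume a: "(j + d) mod m = (j' + d) mod (m::nat)" "j' < m" "j \<le> j'"
  hence "m dvd (j' + d) - (j + d)" using mod_eq_dvd_iff_nat[of "j+d" "j'+d" m] by simp
  hence "m dvd j' - j" by simp
  moreover have "j' - j < m" using a by simp
  ultimately show ?thesis using a(3) by (metis dvd_imp_le le_antisym not_less zero_less_diff)
qed
lemma shift_inj: "(j + d) mod m = (j' + d) mod (m::nat) \<Longrightarrow> j < m \<Longrightarrow> j' < m \<Longrightarrow> j = j'"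
  by (metis shift_inj_aux nat_le_linear)


lemma graph_edge: "graph V E \<Longrightarrow> {a,b} \<in> E \<Longrightarrow> a \<noteq> b \<and> a \<in> V \<and> b \<in> V"
  unfolding graph_def by (metis doubleton_eq_iff)

lemma match_aux:
  assumes G: "graph V E" and euv: "e = {u,v}" "u \<noteq> v" and ab: "{a,b} \<in> E"
    and j: "j < m" "j' < m"
    and R1: "Rel e u v m d E (a,i) (b,j)" and R2: "Rel e u v m d E (a,i) (b,j')"
  shows "j = j'"
proof -
  have ab': "a \<noteq> b" using graph_edge[OF G ab] by simp
  show ?thesis
  proof (cases "{a,b} = e")
    case True
    hence "(a = u \<and> b = v) \<or> (a = v \<and> b = u)" using euv by (simp add: doubleton_eq_iff)
    thus ?thesis
    proof
      assume h: "a = u \<and> b = v"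
      hence "j = (i + d) mod m" "j' = (i + d) mod m" using R1 R2 True ab' unfolding Rel_def by auto
      thus ?thesis by simp
    next
      assume h: "a = v \<and> b = u"
      hence "i = (j + d) mod m" "i = (j' + d) mod m" using R1 R2 True ab' unfolding Rel_def by auto
      thus ?thesis using shift_inj j by metis
    qed
  next
    case False
    have "\<not> (a = u \<and> b = v)" "\<not> (a = v \<and> b = u)" using False euv by (auto simp: insert_commute)
    hence "j = i" "j' = i" using R1 R2 ab' unfolding Rel_def by auto
    thus ?thesis by simp
  qed
qed

lemma cover:
  assumes G: "graph V E" and eE: "e \<in> E" and euv: "e = {u,v}" "u \<noteq> v"
  shows "is_mfold_cover V E m (\<lambda>x. {x} \<times> {..<m}) (V \<times> {..<m}) (CEH V E e u v m d)"
proof -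
  have c1: "graph (V \<times> {..<m}) (CEH V E e u v m d)"
    unfolding graph_def
  proof (intro conjI ballI)
    show "finite (V \<times> {..<m})" using G unfolding graph_def by simp
    fix z assume "z \<in> CEH V E e u v m d"
    from CEH_elem[OF this] show "\<exists>x y. z = {x, y} \<and> x \<noteq> y \<and> x \<in> V \<times> {..<m} \<and> y \<in> V \<times> {..<m}"
    proof (elim exE conjE)
      fix x y assume "z = {x,y}" "x \<in> V \<times> {..<m}" "y \<in> V \<times> {..<m}" "x \<noteq> y"
      thus ?thesis by (intro exI[of _ x] exI[of _ y]) simp
    qed
  qed
  have c2: "(\<Union>x\<in>V. {x} \<times> {..<m}) = V \<times> {..<m}" by auto
  have c7: "\<forall>x\<in>V. card ({x} \<times> {..<m}) = m" by (simp add: card_cartesian_product)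
  have c3: "\<forall>a\<in>V. \<forall>b\<in>V. a \<noteq> b \<longrightarrow> ({a} \<times> {..<m}) \<inter> ({b} \<times> {..<m}) = {}" by auto
  have c4: "\<forall>a\<in>V. \<forall>x\<in>{a} \<times> {..<m}. \<forall>y\<in>{a} \<times> {..<m}. x \<noteq> y \<longrightarrow> {x, y} \<in> CEH V E e u v m d"
    unfolding CEH_iff Rel_def by auto
  have c5: "\<forall>a\<in>V. \<forall>b\<in>V. (\<exists>x\<in>{a} \<times> {..<m}. \<exists>y\<in>{b} \<times> {..<m}. {x, y} \<in> CEH V E e u v m d) \<longrightarrow> a = b \<or> {a, b} \<in> E"
  proof (intro ballI impI)
    fix a b assume "a \<in> V" "b \<in> V" "\<exists>x\<in>{a} \<times> {..<m}. \<exists>y\<in>{b} \<times> {..<m}. {x, y} \<in> CEH V E e u v m d"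
    then obtain x y where xy: "x \<in> {a} \<times> {..<m}" "y \<in> {b} \<times> {..<m}" "Rel e u v m d E x y"
      unfolding CEH_iff by blast
    have "fst x = a" "fst y = b" using xy by auto
    thus "a = b \<or> {a, b} \<in> E" using xy(3) eE euv unfolding Rel_def by (auto simp: insert_commute)
  qed
  have c6: "\<forall>a b. {a, b} \<in> E \<longrightarrow>
        (\<forall>x\<in>{a} \<times> {..<m}. \<forall>y\<in>{b} \<times> {..<m}. \<forall>y'\<in>{b} \<times> {..<m}. {x, y} \<in> CEH V E e u v m d \<and> {x, y'} \<in> CEH V E e u v m d \<longrightarrow> y = y') \<and>
        (\<forall>y\<in>{b} \<times> {..<m}. \<forall>x\<in>{a} \<times> {..<m}. \<forall>x'\<in>{a} \<times> {..<m}. {x, y} \<in> CEH V E e u v m d \<and> {x', y} \<in> CEH V E e u v m d \<longrightarrow> x = x')"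
  proof (intro allI impI conjI)
  fix a b assume ab: "{a, b} \<in> E"
  have ba: "{b, a} \<in> E" using ab by (simp add: insert_commute)
  show "\<forall>x\<in>{a} \<times> {..<m}. \<forall>y\<in>{b} \<times> {..<m}. \<forall>y'\<in>{b} \<times> {..<m}.
          {x, y} \<in> CEH V E e u v m d \<and> {x, y'} \<in> CEH V E e u v m d \<longrightarrow> y = y'"
  proof (intro ballI impI)
    fix x y y' assume h: "x \<in> {a} \<times> {..<m}" "y \<in> {b} \<times> {..<m}" "y' \<in> {b} \<times> {..<m}"
      "{x, y} \<in> CEH V E e u v m d \<and> {x, y'} \<in> CEH V E e u v m d"
    obtain i j j' where ij: "x = (a,i)" "y = (b,j)" "y' = (b,j')" "j < m" "j' < m" using h(1-3) by auto
    have "Rel e u v m d E (a,i) (b,j)" "Rel e u v m d E (a,i) (b,j')" using h(4) ij unfolding CEH_iff by auto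
    from match_aux[OF G euv ab ij(4,5) this] show "y = y'" using ij by simp
  qed
  show "\<forall>y\<in>{b} \<times> {..<m}. \<forall>x\<in>{a} \<times> {..<m}. \<forall>x'\<in>{a} \<times> {..<m}.
          {x, y} \<in> CEH V E e u v m d \<and> {x', y} \<in> CEH V E e u v m d \<longrightarrow> x = x'"
  proof (intro ballI impI)
    fix y x x' assume h: "y \<in> {b} \<times> {..<m}" "x \<in> {a} \<times> {..<m}" "x' \<in> {a} \<times> {..<m}"
      "{x, y} \<in> CEH V E e u v m d \<and> {x', y} \<in> CEH V E e u v m d"
    obtain i j j' where ij: "y = (b,i)" "x = (a,j)" "x' = (a,j')" "j < m" "j' < m" using h(1-3) by auto
    have "Rel e u v m d E (a,j) (b,i)" "Rel e u v m d E (a,j') (b,i)" using h(4) ij unfolding CEH_iff by auto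
    hence "Rel e u v m d E (b,i) (a,j)" "Rel e u v m d E (b,i) (a,j')" using Rel_sym by metis+
    from match_aux[OF G euv ba ij(4,5) this] show "x = x'" using ij by simp
  qed
  qed
  show ?thesis unfolding is_mfold_cover_def is_cover_def
    using c1 c2 c3 c4 c5 c6 c7 by (intro conjI)
qed


definition good :: "'a set \<Rightarrow> 'a set set \<Rightarrow> 'a set \<Rightarrow> 'a \<Rightarrow> 'a \<Rightarrow> nat \<Rightarrow> nat \<Rightarrow> ('a \<Rightarrow> nat) set" where
  "good V E e u v m d = {f \<in> V \<rightarrow>\<^sub>E {..<m}. (\<forall>x y. {x,y} \<in> E - {e} \<longrightarrow> f x \<noteq> f y) \<and> f v \<noteq> (f u + d) mod m}"

lemma count_le:
  assumes G: "graph V E" and euv: "e = {u,v}" "u \<noteq> v" and uv: "u \<in> V" "v \<in> V"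
  shows "dp_count V (V \<times> {..<m}) (CEH V E e u v m d) \<le> card (good V E e u v m d)"
proof -
  let ?VH = "V \<times> {..<m}" and ?EH = "CEH V E e u v m d"
  let ?S = "{I. I \<subseteq> ?VH \<and> (\<forall>x\<in>I. \<forall>y\<in>I. {x, y} \<notin> ?EH) \<and> card I = card V}"
  let ?gr = "\<lambda>f. (\<lambda>x. (x, f x)) ` V"
  have finV: "finite V" using G unfolding graph_def by simp
  have fingood: "finite (good V E e u v m d)"
    by (rule finite_subset[of _ "V \<rightarrow>\<^sub>E {..<m}"]) (auto simp: good_def finV finite_PiE)
  have sub: "?S \<subseteq> ?gr ` good V E e u v m d"
  proof
    fix I assume "I \<in> ?S"
    hence IV: "I \<subseteq> ?VH" and ind: "\<And>p q. p \<in> I \<Longrightarrow> q \<in> I \<Longrightarrow> {p,q} \<notin> ?EH" and cI: "card I = card V"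
      by auto
    have nR: "\<not> Rel e u v m d E p q" if "p \<in> I" "q \<in> I" "p \<noteq> q" for p q
    proof
      assume R: "Rel e u v m d E p q"
      have "p \<in> ?VH" "q \<in> ?VH" using that(1,2) IV by auto
      hence "{p,q} \<in> ?EH" unfolding CEH_iff using R that(3) by simp
      thus False using ind[OF that(1,2)] by simp
    qed
    have injI: "p = q" if "p \<in> I" "q \<in> I" "fst p = fst q" for p q
      using nR[OF that(1,2)] that(3) by (cases "p = q") (auto simp: Rel_def)
    have finI: "finite I" using IV finV by (meson finite_SigmaI finite_lessThan finite_subset)
    have "inj_on fst I" using injI by (auto simp: inj_on_def)
    hence "card (fst ` I) = card V" using cI by (simp add: card_image)
    moreover have "fst ` I \<subseteq> V" using IV by auto
    ultimately have fI: "fst ` I = V" using finV by (simp add: card_subset_eq)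
    define f where "f = (\<lambda>x\<in>V. THE i. (x,i) \<in> I)"
    have ex1: "\<exists>!i. (x,i) \<in> I" if "x \<in> V" for x
    proof -
      obtain p where "p \<in> I" "fst p = x" using fI \<open>x \<in> V\<close> by force
      hence "(x, snd p) \<in> I" by (metis prod.collapse)
      moreover have "i = snd p" if "(x,i) \<in> I" for i using injI[OF that \<open>(x, snd p) \<in> I\<close>] by simp
      ultimately show ?thesis by (intro ex1I[of _ "snd p"])
    qed
    have fin: "(x, f x) \<in> I" if "x \<in> V" for x
      using theI'[OF ex1[OF that]] that unfolding f_def by simp
    have Igr: "I = ?gr f"
    proof
      show "I \<subseteq> ?gr f"
      proof
        fix p assume p: "p \<in> I"
        then obtain a i where ai: "p = (a,i)" "a \<in> V" using IV by auto
        have "(a, f a) \<in> I" using fin ai by simp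
        hence "p = (a, f a)" using injI[OF p, of "(a, f a)"] ai by simp
        thus "p \<in> ?gr f" using ai by auto
      qed
      show "?gr f \<subseteq> I" using fin by auto
    qed
    have fpi: "f \<in> V \<rightarrow>\<^sub>E {..<m}"
    proof
      fix x assume "x \<in> V" thus "f x \<in> {..<m}" using fin IV by auto
    next
      fix x assume "x \<notin> V" thus "f x = undefined" unfolding f_def by simp
    qed
    have propf: "f x \<noteq> f y" if "{x,y} \<in> E - {e}" for x y
    proof
      assume eq: "f x = f y"
      have xy: "x \<noteq> y" "x \<in> V" "y \<in> V" using graph_edge[OF G] that by auto
      have "Rel e u v m d E (x, f x) (y, f y)" using that eq unfolding Rel_def by simp
      moreover have "(x, f x) \<noteq> (y, f y)" using xy by simp
      ultimately show False using nR[OF fin[OF xy(2)] fin[OF xy(3)]] by simp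
    qed
    have sh: "f v \<noteq> (f u + d) mod m"
    proof
      assume eq: "f v = (f u + d) mod m"
      have "Rel e u v m d E (u, f u) (v, f v)" using eq unfolding Rel_def by simp
      moreover have "(u, f u) \<noteq> (v, f v)" using euv by simp
      ultimately show False using nR[OF fin[OF uv(1)] fin[OF uv(2)]] by simp
    qed
    have "f \<in> good V E e u v m d" unfolding good_def using fpi propf sh by simp
    thus "I \<in> ?gr ` good V E e u v m d" using Igr by (intro rev_image_eqI[of f]) simp_all
  qed
  have "dp_count V ?VH ?EH = card ?S" unfolding dp_count_def by simp
  also have "\<dots> \<le> card (?gr ` good V E e u v m d)"
    by (rule card_mono[OF finite_imageI[OF fingood] sub])
  also have "\<dots> \<le> card (good V E e u v m d)" by (rule card_image_le[OF fingood])
  finally show ?thesis .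
qed


lemma shift_back:
  assumes "a < m" "b < (m::nat)"
  shows "(a + (b + m - a) mod m) mod m = b"
proof -
  have "(a + (b + m - a) mod m) mod m = (a + (b + m - a)) mod m" by (simp add: mod_add_right_eq)
  also have "a + (b + m - a) = b + m" using assms by simp
  also have "(b + m) mod m = b" using assms by simp
  finally show ?thesis .
qed

theorem mainTheorem9:
  fixes V :: "'a set" and E :: "'a set set" and e :: "'a set" and m :: nat
  assumes "graph V E" and "e \<in> E" and "m \<ge> 2"
    and "real (chrom V (E - {e}) m) < real m / (real m - 1) * real (chrom V E m)"
  shows "P_DP V E m < chrom V E m"
proof -
  note G = assms(1) and eE = assms(2)
  have "\<exists>x y. e = {x, y} \<and> x \<noteq> y \<and> x \<in> V \<and> y \<in> V" using G eE unfolding graph_def by simp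
  then obtain u v where euv: "e = {u,v}" "u \<noteq> v" and uv: "u \<in> V" "v \<in> V"
    by auto
  have finV: "finite V" using G unfolding graph_def by simp
  define A where "A = {f \<in> V \<rightarrow>\<^sub>E {..<m}. \<forall>x y. {x, y} \<in> E - {e} \<longrightarrow> f x \<noteq> f y}"
  define B where "B = {f \<in> V \<rightarrow>\<^sub>E {..<m}. \<forall>x y. {x, y} \<in> E \<longrightarrow> f x \<noteq> f y}"
  define Bad where "Bad = (\<lambda>d. {f \<in> A. f v = (f u + d) mod m})"
  have finA: "finite A" unfolding A_def by (rule finite_subset[of _ "V \<rightarrow>\<^sub>E {..<m}"]) (auto simp: finV finite_PiE)
  have cA: "card A = chrom V (E - {e}) m" unfolding A_def chrom_def by simp
  have cB: "card B = chrom V E m" unfolding B_def chrom_def by simp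
  have goodeq: "good V E e u v m d = A - Bad d" for d
    unfolding good_def A_def Bad_def by auto
  have cgood: "card (good V E e u v m d) + card (Bad d) = card A" for d
  proof -
    have sub: "Bad d \<subseteq> A" unfolding Bad_def by auto
    have f: "finite (Bad d)" using finite_subset[OF sub finA] .
    have "card (A - Bad d) = card A - card (Bad d)" by (rule card_Diff_subset[OF f sub])
    moreover have "card (Bad d) \<le> card A" by (rule card_mono[OF finA sub])
    ultimately show ?thesis unfolding goodeq by simp
  qed
  have Bun: "B = (\<Union>d\<in>{1..<m}. Bad d)"
  proof
    show "B \<subseteq> (\<Union>d\<in>{1..<m}. Bad d)"
    proof
      fix f assume fB: "f \<in> B"
      have fA: "f \<in> A" using fB unfolding A_def B_def by auto
      have fuv: "f u \<noteq> f v" using fB euv eE unfolding B_def by auto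
      have lt: "f u < m" "f v < m" using fB uv unfolding B_def by auto
      define d where "d = (f v + m - f u) mod m"
      have sh: "(f u + d) mod m = f v" unfolding d_def using shift_back[OF lt] .
      have "d \<noteq> 0"
      proof
        assume "d = 0" thus False using sh fuv lt by simp
      qed
      moreover have "d < m" unfolding d_def using lt by simp
      ultimately have "d \<in> {1..<m}" by simp
      moreover have "f \<in> Bad d" unfolding Bad_def using fA sh by simp
      ultimately show "f \<in> (\<Union>d\<in>{1..<m}. Bad d)" by blast
    qed
    show "(\<Union>d\<in>{1..<m}. Bad d) \<subseteq> B"
    proof
      fix f assume "f \<in> (\<Union>d\<in>{1..<m}. Bad d)"
      then obtain d where d: "d \<in> {1..<m}" "f \<in> Bad d" by blast
      have fA: "f \<in> A" and fv: "f v = (f u + d) mod m" using d unfolding Bad_def by auto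
      have lt: "f u < m" using fA uv unfolding A_def by auto
      have fuv: "f u \<noteq> f v"
      proof
        assume "f u = f v"
        hence "(f u + 0) mod m = (f u + d) mod m" using fv lt by simp
        hence "0 = d" using shift_inj[of 0 "f u" m d] d by (simp add: add.commute)
        thus False using d by simp
      qed
      show "f \<in> B" unfolding B_def
      proof (intro CollectI conjI allI impI)
        show "f \<in> V \<rightarrow>\<^sub>E {..<m}" using fA unfolding A_def by simp
        fix x y assume xy: "{x,y} \<in> E"
        show "f x \<noteq> f y"
        proof (cases "{x,y} = e")
          case True
          hence "(x = u \<and> y = v) \<or> (x = v \<and> y = u)" using euv by (simp add: doubleton_eq_iff)
          thus ?thesis using fuv by auto
        next
          case False thus ?thesis using fA xy unfolding A_def by auto
        qed
      qed
    qed
  qed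
  have disj: "Bad d \<inter> Bad d' = {}" if "d \<in> {1..<m}" "d' \<in> {1..<m}" "d \<noteq> d'" for d d'
  proof (rule ccontr)
    assume "Bad d \<inter> Bad d' \<noteq> {}"
    then obtain f where "f \<in> Bad d \<inter> Bad d'" by (meson ex_in_conv)
    hence "(f u + d) mod m = (f u + d') mod m" unfolding Bad_def by simp
    hence "(d + f u) mod m = (d' + f u) mod m" by (simp only: add.commute)
    moreover have "d < m" "d' < m" using that(1,2) by auto
    ultimately have "d = d'" by (rule shift_inj)
    thus False using that by simp
  qed
  have finBad: "finite (Bad d)" for d unfolding Bad_def using finA by simp
  have cBsum: "card B = (\<Sum>d\<in>{1..<m}. card (Bad d))"
    unfolding Bun by (rule card_UN_disjoint) (auto simp: finBad disj)
  have total: "(\<Sum>d\<in>{1..<m}. card (good V E e u v m d)) + card B = (m - 1) * card A"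
  proof -
    have "(\<Sum>d\<in>{1..<m}. card (good V E e u v m d)) + card B = (\<Sum>d\<in>{1..<m}. card (good V E e u v m d) + card (Bad d))"
      unfolding cBsum by (rule sum.distrib[symmetric])
    also have "\<dots> = (\<Sum>d\<in>{1..<m}. card A)" using cgood by simp
    also have "\<dots> = (m - 1) * card A" by simp
    finally show ?thesis .
  qed
  have m1: "real m - 1 > 0" using assms(3) by simp
  have "real (card A) * (real m - 1) < real m * real (card B)"
    using assms(4) m1 unfolding cA cB by (simp add: field_simps)
  hence ineq: "(m - 1) * card A < m * card B"
  proof -
    have "real (m - 1) = real m - 1" using assms(3) by (simp add: of_nat_diff)
    hence "real ((m - 1) * card A) < real (m * card B)" using \<open>real (card A) * (real m - 1) < real m * real (card B)\<close>
      by (simp add: mult.commute)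
    thus ?thesis by (rule of_nat_less_imp_less)
  qed
  have "\<exists>d\<in>{1..<m}. card (good V E e u v m d) < card B"
  proof (rule ccontr)
    assume "\<not> ?thesis"
    hence "\<forall>d\<in>{1..<m}. card B \<le> card (good V E e u v m d)" by auto
    hence "(\<Sum>d\<in>{1..<m}. card B) \<le> (\<Sum>d\<in>{1..<m}. card (good V E e u v m d))" by (intro sum_mono) blast
    hence "(m - 1) * card B + card B \<le> (m - 1) * card A" using total by simp
    moreover have "(m - 1) * card B + card B = m * card B" using assms(3)
      by (cases m) simp_all
    ultimately show False using ineq by simp
  qed
  then obtain d where d: "card (good V E e u v m d) < card B" by blast
  have cov: "is_mfold_cover V E m (\<lambda>x. {x} \<times> {..<m}) (V \<times> {..<m}) (CEH V E e u v m d)"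
    by (rule cover[OF G eE euv])
  have mem: "dp_count V (V \<times> {..<m}) (CEH V E e u v m d) \<in>
      {dp_count V VH EH | L VH (EH :: ('a \<times> nat) set set). is_mfold_cover V E m L VH EH}"
    using cov by (intro CollectI exI[of _ "\<lambda>x. {x} \<times> {..<m}"] exI[of _ "V \<times> {..<m}"] exI[of _ "CEH V E e u v m d"]) simp
  have "P_DP V E m \<le> dp_count V (V \<times> {..<m}) (CEH V E e u v m d)"
    unfolding P_DP_def by (rule cInf_lower[OF mem bdd_below_bot])
  also have "\<dots> \<le> card (good V E e u v m d)" by (rule count_le[OF G euv uv])
  also have "\<dots> < chrom V E m" using d cB by simp
  finally show ?thesis .
qed

end
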